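(* Let $h>0$, $\lambda\in[0,1)$, $\mu\in\mathcal{M}(h,\lambda)$, and let $f:\mathbb{R}\to\mathbb{R}$ be convex with $f(0)=0$. Then $\int\left(e^{f/2}-e^{-f/2}\right)^2d\mu\le\frac{8}{(1-\lambda)^2}\int e^{f(x)}\big((Df)(x)\big)^2\,d\mu(x).$
   Context: $\mathcal{M}(h,\lambda)$ is the class of symmetric Borel probability measures $\mu$ on $\mathbb{R}$ with $\mu([x+h,\infty))\le\lambda\,\mu([x,\infty))$ for all $x\ge0$. For convex $f:\mathbb{R}\to\mathbb{R}$, let $x_0$ be a point where $f$ attains its minimum; if $f$ attains no minimum (so $f$ is monotone), set $x_0=-\infty$ if $f$ is non-decreasing and $x_0=+\infty$ if $f$ is non-increasing. The discrete gradient (with step $h$) is $(Df)(x)=f(x)-f(x-h)$ for $x>x_0+h$; $(Df)(x)=f(x)-f(x_0)$ for $x\in[x_0-h,x_0+h]$; $(Df)(x)=f(x)-f(x+h)$ for $x<x_0-h$. (The quantity does not depend on the choice of minimizer $x_0$.) *)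

theory Defs
  imports "HOL-Probability.Probability"
begin

definition class_M :: "real \<Rightarrow> real \<Rightarrow> real measure \<Rightarrow> bool" where
  "class_M h lam \<mu> \<longleftrightarrow>
     sets \<mu> = sets borel \<and> prob_space \<mu> \<and>
     distr \<mu> borel uminus = \<mu> \<and>
     (\<forall>x\<ge>0. measure \<mu> {x+h..} \<le> lam * measure \<mu> {x..})"

text \<open>Discrete gradient with step h. If f attains its minimum, x0 is a minimiser;
  otherwise x0 = -inf if f is non-decreasing and x0 = +inf if f is non-increasing.\<close>
definition discrete_grad :: "real \<Rightarrow> (real \<Rightarrow> real) \<Rightarrow> real \<Rightarrow> real" where
  "discrete_grad h f x =
     (if \<exists>x0. \<forall>y. f x0 \<le> f y then
        (let x0 = (SOME x0. \<forall>y. f x0 \<le> f y) in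
          if x > x0 + h then f x - f (x - h)
          else if x < x0 - h then f x - f (x + h)
          else f x - f x0)
      else if mono f then f x - f (x - h)
      else f x - f (x + h))"

end

theory Submission
  imports Defs
begin

lemma conv3:
  fixes f :: "real \<Rightarrow> real"
  assumes "convex_on UNIV f" "p < q" "q < r"
  shows "f q * (r - p) \<le> (r - q) * f p + (q - p) * f r"
proof -
  define t where "t = (q - p) / (r - p)"
  have t: "0 \<le> t" "t \<le> 1" using assms by (auto simp: t_def field_simps)
  have tr: "t * (r - p) = q - p" using assms by (simp add: t_def)
  have q: "(1 - t) * p + t * r = q" using tr by (simp add: algebra_simps)
  have "f ((1 - t) * p + t * r) \<le> (1 - t) * f p + t * f r"
    using convex_onD[OF assms(1) t] by simp
  hence "f q \<le> (1 - t) * f p + t * f r" by (simp add: q)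
  hence "f q * (r - p) \<le> ((1 - t) * f p + t * f r) * (r - p)"
    using assms by (intro mult_right_mono) auto
  also have "\<dots> = f p * ((r - p) - t * (r - p)) + f r * (t * (r - p))"
    by (simp add: algebra_simps)
  also have "\<dots> = (r - q) * f p + (q - p) * f r"
    unfolding tr by (simp add: algebra_simps)
  finally show ?thesis .
qed

lemma conv_up:
  fixes f :: "real \<Rightarrow> real"
  assumes "convex_on UNIV f" "\<forall>y. f x0 \<le> f y" "x0 \<le> a" "a \<le> b"
  shows "f a \<le> f b"
proof (cases "x0 < a \<and> a < b")
  case True
  have "f a * (b - x0) \<le> (b - a) * f x0 + (a - x0) * f b" using conv3[OF assms(1)] True by auto
  also have "\<dots> \<le> (b - a) * f b + (a - x0) * f b" using assms True by (intro add_mono mult_left_mono) auto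
  finally have "f a * (b - x0) \<le> f b * (b - x0)" by (simp add: algebra_simps)
  thus ?thesis using True by simp
next
  case False
  thus ?thesis using assms by (cases "a = b") auto
qed

lemma conv_down:
  fixes f :: "real \<Rightarrow> real"
  assumes "convex_on UNIV f" "\<forall>y. f x0 \<le> f y" "b \<le> x0" "a \<le> b"
  shows "f b \<le> f a"
proof (cases "a < b \<and> b < x0")
  case True
  have "f b * (x0 - a) \<le> (x0 - b) * f a + (b - a) * f x0" using conv3[OF assms(1)] True by auto
  also have "\<dots> \<le> (x0 - b) * f a + (b - a) * f a" using assms True by (intro add_mono mult_left_mono) auto
  finally have "f b * (x0 - a) \<le> f a * (x0 - a)" by (simp add: algebra_simps)
  thus ?thesis using True by simp
next
  case False
  thus ?thesis using assms by (cases "a = b") auto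
qed

lemma no_min_antimono:
  fixes f :: "real \<Rightarrow> real"
  assumes cf: "convex_on UNIV f" and nm: "\<not> (\<exists>x0. \<forall>y. f x0 \<le> f y)" and nmono: "\<not> mono f"
  shows "f a \<le> f b \<longrightarrow> b \<le> a \<or> True" and "b \<le> a \<Longrightarrow> f a \<le> f b"
proof -
  show "f a \<le> f b \<longrightarrow> b \<le> a \<or> True" by simp
next
  assume ba: "b \<le> a"
  show "f a \<le> f b"
  proof (rule ccontr)
    assume "\<not> f a \<le> f b"
    hence ab: "b < a" "f b < f a" using ba by (cases "a = b", auto)
    from nmono obtain c d where cd: "c \<le> d" "\<not> f c \<le> f d" unfolding mono_def by auto
    hence cd2: "c < d" "f d < f c" by (cases "c = d", auto)
    have cont: "continuous_on UNIV f" using convex_on_continuous[OF _ cf] by simp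
    obtain xs where xs: "xs \<in> {min c a..max c a}" "\<forall>y\<in>{min c a..max c a}. f xs \<le> f y"
    proof -
      have "continuous_on {min c a..max c a} f" using continuous_on_subset[OF cont] by blast
      moreover have "{min c a..max c a} \<noteq> {}" by simp
      ultimately show ?thesis using continuous_attains_inf[OF compact_Icc] that by blast
    qed
    have "\<forall>y. f xs \<le> f y"
    proof
      fix y
      show "f xs \<le> f y"
      proof (cases "y < min c a")
        case True
        hence yc: "y < c" by simp
        have "f c * (d - y) \<le> (d - c) * f y + (c - y) * f d" using conv3[OF cf yc cd2(1)] .
        hence "f y > f c"
        proof -
          assume h: "f c * (d - y) \<le> (d - c) * f y + (c - y) * f d"
          show "f y > f c"
          proof (rule ccontr)
            assume "\<not> f y > f c"
            hence "(d - c) * f y \<le> (d - c) * f c" using cd2 by (intro mult_left_mono) auto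
            moreover have "(c - y) * f d < (c - y) * f c" using cd2 yc by (intro mult_strict_left_mono) auto
            ultimately have "f c * (d - y) < (d - c) * f c + (c - y) * f c" using h by linarith
            thus False by (simp add: algebra_simps)
          qed
        qed
        moreover have "f xs \<le> f c" using xs by auto
        ultimately show ?thesis by simp
      next
        case F1: False
        show ?thesis
        proof (cases "y > max c a")
          case True
          hence ya: "a < y" by simp
          have h: "f a * (y - b) \<le> (y - a) * f b + (a - b) * f y" using conv3[OF cf ab(1) ya] .
          have "f y > f a"
          proof (rule ccontr)
            assume "\<not> f y > f a"
            hence "(a - b) * f y \<le> (a - b) * f a" using ab by (intro mult_left_mono) auto
            moreover have "(y - a) * f b < (y - a) * f a" using ab ya by (intro mult_strict_left_mono) auto
            ultimately have "f a * (y - b) < (y - a) * f a + (a - b) * f a" using h by linarith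
            thus False by (simp add: algebra_simps)
          qed
          moreover have "f xs \<le> f a" using xs by auto
          ultimately show ?thesis by simp
        next
          case False
          thus ?thesis using F1 xs by auto
        qed
      qed
    qed
    thus False using nm by auto
  qed
qed

lemma dg_bound:
  fixes f :: "real \<Rightarrow> real"
  assumes cf: "convex_on UNIV f" and h: "h > 0" and y: "x - h \<le> y" "y \<le> x + h"
  shows "f x - f y \<le> \<bar>discrete_grad h f x\<bar>"
proof (cases "\<exists>x0. \<forall>y. f x0 \<le> f y")
  case True
  define x0 where "x0 = (SOME x0. \<forall>y. f x0 \<le> f y)"
  have m: "\<forall>y. f x0 \<le> f y" using someI_ex[OF True] unfolding x0_def .
  have D: "discrete_grad h f x = (if x > x0 + h then f x - f (x - h)
          else if x < x0 - h then f x - f (x + h) else f x - f x0)"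
    unfolding discrete_grad_def using True by (simp add: x0_def Let_def)
  show ?thesis
  proof (cases "x > x0 + h")
    case True
    show ?thesis
    proof (cases "y \<le> x")
      case True
      have "f (x - h) \<le> f y" using conv_up[OF cf m, of "x - h" y] True \<open>x > x0 + h\<close> y by auto
      thus ?thesis using D \<open>x > x0 + h\<close> by auto
    next
      case False
      have "f x \<le> f y" using conv_up[OF cf m, of x y] False \<open>x > x0 + h\<close> h by auto
      thus ?thesis by auto
    qed
  next
    case F1: False
    show ?thesis
    proof (cases "x < x0 - h")
      case True
      show ?thesis
      proof (cases "y \<le> x")
        case True
        have "f x \<le> f y" using conv_down[OF cf m, of x y] True \<open>x < x0 - h\<close> h by auto
        thus ?thesis by auto
      next
        case False
        have "f (x + h) \<le> f y" using conv_down[OF cf m, of "x + h" y] False \<open>x < x0 - h\<close> y by auto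
        thus ?thesis using D True F1 by auto
      qed
    next
      case False
      thus ?thesis using D F1 m[rule_format, of y] by auto
    qed
  qed
next
  case False
  show ?thesis
  proof (cases "mono f")
    case True
    have D: "discrete_grad h f x = f x - f (x - h)"
      unfolding discrete_grad_def by (simp only: if_not_P[OF False] if_P[OF True])
    have "f (x - h) \<le> f y" using True y unfolding mono_def by auto
    thus ?thesis using D by auto
  next
    case nmono: False
    have D: "discrete_grad h f x = f x - f (x + h)"
      unfolding discrete_grad_def by (simp only: if_not_P[OF False] if_not_P[OF nmono])
    show ?thesis
    proof (cases "y \<le> x")
      case True
      have "f x \<le> f y" using no_min_antimono(2)[OF cf False nmono True] .
      thus ?thesis by auto
    next
      case F: False
      have "f (x + h) \<le> f y" using no_min_antimono(2)[OF cf False nmono] y by auto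
      thus ?thesis using D by auto
    qed
  qed
qed


definition psi :: "real \<Rightarrow> real" where "psi t = exp (t / 2) - exp (- t / 2)"

lemma psi_mono: "b \<le> a \<Longrightarrow> psi b \<le> psi a"
  unfolding psi_def by (intro diff_mono) auto

lemma psi_0[simp]: "psi 0 = 0" by (simp add: psi_def)
lemma psi_neg: "psi (- t) = - psi t" by (simp add: psi_def)

lemma psi_diff:
  assumes "0 \<le> b" "b \<le> a"
  shows "(psi a - psi b)\<^sup>2 \<le> exp a * (a - b)\<^sup>2"
proof -
  have e: "1 - exp (- ((a - b) / 2)) \<le> (a - b) / 2"
    using exp_ge_add_one_self[of "- ((a - b) / 2)"] by linarith
  have e0: "0 \<le> 1 - exp (- ((a - b) / 2))" using assms by simp
  have "exp (a / 2) * exp (- ((a - b) / 2)) = exp (a / 2 + - ((a - b) / 2))" by (rule exp_add[symmetric])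
  also have "a / 2 + - ((a - b) / 2) = b / 2" by (simp add: field_simps)
  finally have 1: "exp (a / 2) - exp (b / 2) = exp (a / 2) * (1 - exp (- ((a - b) / 2)))"
    by (simp add: algebra_simps)
  have 2: "exp (- b / 2) - exp (- a / 2) = exp (- b / 2) * (1 - exp (- ((a - b) / 2)))"
    by (simp add: algebra_simps flip: exp_add)
  have "exp (a / 2) - exp (b / 2) \<le> exp (a / 2) * ((a - b) / 2)"
    unfolding 1 by (intro mult_left_mono e) auto
  moreover have "exp (- b / 2) - exp (- a / 2) \<le> 1 * ((a - b) / 2)"
    unfolding 2 using e e0 assms by (intro mult_mono) auto
  moreover have "1 \<le> exp (a / 2)" using assms by simp
  moreover have "0 \<le> (a - b) / 2" using assms by simp
  ultimately have "psi a - psi b \<le> exp (a / 2) * ((a - b) / 2) + exp (a / 2) * ((a - b) / 2)"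
    unfolding psi_def using mult_right_mono[of 1 "exp (a / 2)" "(a - b) / 2"] by linarith
  hence "psi a - psi b \<le> exp (a / 2) * (a - b)" by (simp add: field_simps)
  moreover have "0 \<le> psi a - psi b" using psi_mono[OF assms(2)] by simp
  ultimately have "(psi a - psi b)\<^sup>2 \<le> (exp (a / 2) * (a - b))\<^sup>2"
    by (intro power_mono) auto
  also have "\<dots> = exp a * (a - b)\<^sup>2"
    by (simp add: power_mult_distrib power2_eq_square flip: exp_add)
  finally show ?thesis .
qed

lemma psi_sq_le:
  assumes "\<bar>t\<bar> \<le> s"
  shows "(psi t)\<^sup>2 \<le> (psi s)\<^sup>2"
proof -
  have "(psi t)\<^sup>2 = (psi \<bar>t\<bar>)\<^sup>2" by (cases "t \<ge> 0") (auto simp: psi_neg)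
  also have "\<dots> \<le> (psi s)\<^sup>2"
    using psi_mono[OF assms] psi_mono[of 0 "\<bar>t\<bar>"] by (intro power_mono) auto
  finally show ?thesis .
qed

lemma m_nonneg:
  fixes f :: "real \<Rightarrow> real"
  assumes cf: "convex_on UNIV f" and f0: "f 0 = 0"
  shows "0 \<le> max (f x) (f (- x))"
proof -
  have "f ((1 - 1/2) * x + (1/2) * (- x)) \<le> (1 - 1/2) * f x + (1/2) * f (- x)"
    using convex_onD[OF cf, of "1/2" x "-x"] by simp
  thus ?thesis using f0 by simp
qed

lemma conv_seg:
  fixes f :: "real \<Rightarrow> real"
  assumes cf: "convex_on UNIV f" and f0: "f 0 = 0" and "0 \<le> y" "y \<le> x"
  shows "f y \<le> max 0 (f x)"
proof (cases "x = 0")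
  case True thus ?thesis using assms by simp
next
  case False
  hence x: "x > 0" using assms by simp
  have "f ((1 - y / x) * 0 + (y / x) * x) \<le> (1 - y / x) * f 0 + (y / x) * f x"
    using convex_onD[OF cf, of "y/x" 0 x] assms x by simp
  hence "f y \<le> (y / x) * f x" using x f0 by simp
  also have "\<dots> \<le> max 0 (f x)"
  proof (cases "f x \<ge> 0")
    case True
    have "y / x \<le> 1" using assms x by simp
    hence "(y / x) * f x \<le> 1 * f x" using True by (intro mult_right_mono) auto
    thus ?thesis by simp
  next
    case False
    have "(y / x) * f x \<le> 0" using False assms x by (intro mult_nonneg_nonpos) auto
    thus ?thesis by simp
  qed
  finally show ?thesis .
qed

lemma m_mono:
  fixes f :: "real \<Rightarrow> real"
  assumes cf: "convex_on UNIV f" and f0: "f 0 = 0" and "0 \<le> y" "y \<le> x"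
  shows "max (f y) (f (- y)) \<le> max (f x) (f (- x))"
proof -
  have cf': "convex_on UNIV (\<lambda>x. f (- x))"
  proof (rule convex_onI)
    fix t x y :: real assume "t > 0" "t < 1"
    thus "f (- ((1 - t) *\<^sub>R x + t *\<^sub>R y)) \<le> (1 - t) * f (- x) + t * f (- y)"
      using convex_onD[OF cf, of t "-x" "-y"] by (simp add: algebra_simps)
  qed simp
  have "f y \<le> max 0 (f x)" by (rule conv_seg[OF cf f0 assms(3,4)])
  moreover have "f (- y) \<le> max 0 (f (- x))" using conv_seg[OF cf' _ assms(3,4)] f0 by simp
  moreover have "0 \<le> max (f x) (f (- x))" by (rule m_nonneg[OF cf f0])
  ultimately show ?thesis by auto
qed


lemma delta_bound:
  fixes f :: "real \<Rightarrow> real"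
  assumes cf: "convex_on UNIV f" and f0: "f 0 = 0" and h: "h > 0" and x: "x \<ge> 0"
  shows "(psi (max (f x) (f (- x))) - psi (max (f (max (x - h) 0)) (f (- max (x - h) 0))))\<^sup>2
    \<le> indicator {0<..} x * (exp (f x) * (discrete_grad h f x)\<^sup>2
         + exp (f (- x)) * (discrete_grad h f (- x))\<^sup>2)"
proof (cases "x = 0")
  case True thus ?thesis using h by simp
next
  case False
  hence xp: "x > 0" using x by simp
  define y where "y = max (x - h) 0"
  define a where "a = max (f x) (f (- x))"
  define b where "b = max (f y) (f (- y))"
  have y: "0 \<le> y" "y \<le> x" "x - h \<le> y" using xp h by (auto simp: y_def)
  have b0: "0 \<le> b" unfolding b_def by (rule m_nonneg[OF cf f0])
  have ba: "b \<le> a" unfolding a_def b_def by (rule m_mono[OF cf f0 y(1,2)])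
  have R0: "0 \<le> exp (f z) * (discrete_grad h f z)\<^sup>2" for z by simp
  have "(psi a - psi b)\<^sup>2 \<le> exp a * (a - b)\<^sup>2" by (rule psi_diff[OF b0 ba])
  also have "\<dots> \<le> exp (f x) * (discrete_grad h f x)\<^sup>2 + exp (f (- x)) * (discrete_grad h f (- x))\<^sup>2"
  proof (cases "f (- x) \<le> f x")
    case True
    hence aeq: "a = f x" by (simp add: a_def)
    have "a - b \<le> f x - f y" using aeq b_def by simp
    also have "\<dots> \<le> \<bar>discrete_grad h f x\<bar>" by (rule dg_bound[OF cf h]) (use y h in auto)
    finally have "(a - b)\<^sup>2 \<le> \<bar>discrete_grad h f x\<bar>\<^sup>2" using ba by (intro power_mono) auto
    hence "(a - b)\<^sup>2 \<le> (discrete_grad h f x)\<^sup>2" by (simp add: power2_abs)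
    hence "exp (f x) * (a - b)\<^sup>2 \<le> exp (f x) * (discrete_grad h f x)\<^sup>2"
      by (rule mult_left_mono) simp
    hence "exp a * (a - b)\<^sup>2 \<le> exp (f x) * (discrete_grad h f x)\<^sup>2"
      using aeq by simp
    thus ?thesis using R0[of "- x"] by linarith
  next
    case False
    hence aeq: "a = f (- x)" by (simp add: a_def)
    have "a - b \<le> f (- x) - f (- y)" using aeq b_def by simp
    also have "\<dots> \<le> \<bar>discrete_grad h f (- x)\<bar>" by (rule dg_bound[OF cf h]) (use y h in auto)
    finally have "(a - b)\<^sup>2 \<le> \<bar>discrete_grad h f (- x)\<bar>\<^sup>2" using ba by (intro power_mono) auto
    hence "(a - b)\<^sup>2 \<le> (discrete_grad h f (- x))\<^sup>2" by (simp add: power2_abs)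
    hence "exp (f (- x)) * (a - b)\<^sup>2 \<le> exp (f (- x)) * (discrete_grad h f (- x))\<^sup>2"
      by (rule mult_left_mono) simp
    hence "exp a * (a - b)\<^sup>2 \<le> exp (f (- x)) * (discrete_grad h f (- x))\<^sup>2"
      using aeq by simp
    thus ?thesis using R0[of x] by linarith
  qed
  finally have fin: "(psi a - psi b)\<^sup>2 \<le> exp (f x) * (discrete_grad h f x)\<^sup>2
         + exp (f (- x)) * (discrete_grad h f (- x))\<^sup>2" .
  have ind: "indicator {0<..} x = (1::real)" using xp by simp
  show ?thesis unfolding ind using fin by (simp only: a_def b_def y_def mult_1)
qed

lemma dg_measurable:
  fixes f :: "real \<Rightarrow> real"
  assumes cf: "convex_on UNIV f"
  shows "discrete_grad h f \<in> borel_measurable borel"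
proof -
  have cont: "continuous_on UNIV f" using convex_on_continuous[OF _ cf] by simp
  hence [measurable]: "f \<in> borel_measurable borel" by (rule borel_measurable_continuous_onI)
  define x0 where "x0 = (SOME x0. \<forall>y. f x0 \<le> f y)"
  show ?thesis
  proof (cases "\<exists>x0. \<forall>y. f x0 \<le> f y")
    case True
    have "discrete_grad h f = (\<lambda>x. if x > x0 + h then f x - f (x - h)
          else if x < x0 - h then f x - f (x + h)
          else f x - f x0)"
      unfolding discrete_grad_def by (simp only: if_P[OF True] Let_def x0_def)
    also have "\<dots> \<in> borel_measurable borel" by measurable
    finally show ?thesis .
  next
    case F: False
    show ?thesis
    proof (cases "mono f")
      case True
      have "discrete_grad h f = (\<lambda>x. f x - f (x - h))"
        unfolding discrete_grad_def by (simp only: if_not_P[OF F] if_P[OF True])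
      also have "\<dots> \<in> borel_measurable borel" by measurable
      finally show ?thesis .
    next
      case False
      have "discrete_grad h f = (\<lambda>x. f x - f (x + h))"
        unfolding discrete_grad_def by (simp only: if_not_P[OF F] if_not_P[OF False])
      also have "\<dots> \<in> borel_measurable borel" by measurable
      finally show ?thesis .
    qed
  qed
qed


lemma cm_basic:
  assumes "class_M h lam \<mu>"
  shows "prob_space \<mu>" "sets \<mu> = sets borel" "space \<mu> = UNIV"
    "measurable \<mu> N = measurable borel N" "distr \<mu> borel uminus = \<mu>"
  using assms unfolding class_M_def
  by (auto intro: measurable_cong_sets dest: sets_eq_imp_space_eq)

lemma sym_int:
  assumes cm: "class_M h lam \<mu>" and F: "F \<in> borel_measurable borel"
  shows "(\<integral>\<^sup>+x. F (- x) \<partial>\<mu>) = (\<integral>\<^sup>+x. F x \<partial>\<mu>)"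
proof -
  have T: "uminus \<in> measurable \<mu> borel" unfolding cm_basic(4)[OF cm] by measurable
  have F': "F \<in> borel_measurable (distr \<mu> borel uminus)"
    unfolding cm_basic(5)[OF cm] cm_basic(4)[OF cm] by (rule F)
  have "(\<integral>\<^sup>+x. F x \<partial>\<mu>) = integral\<^sup>N (distr \<mu> borel uminus) F"
    unfolding cm_basic(5)[OF cm] by (rule refl)
  also have "\<dots> = (\<integral>\<^sup>+x. F (- x) \<partial>\<mu>)" by (rule nn_integral_distr[OF T F'])
  finally show ?thesis by simp
qed

lemma layer_c:
  fixes g :: "real \<Rightarrow> real"
  assumes sf: "sigma_finite_measure M" and [measurable]: "g \<in> borel_measurable M"
    and g0: "\<And>x. 0 \<le> g x"
  shows "(\<integral>\<^sup>+x. ennreal c * ennreal (g x) \<partial>M)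
     = (\<integral>\<^sup>+t. ennreal c * emeasure M {x\<in>space M. 0 < t \<and> t \<le> g x} \<partial>lborel)"
proof -
  interpret pair_sigma_finite M lborel
    unfolding pair_sigma_finite_def using sf lborel.sigma_finite_measure_axioms by simp
  have "(\<integral>\<^sup>+x. ennreal c * ennreal (g x) \<partial>M)
      = (\<integral>\<^sup>+x. (\<integral>\<^sup>+t. ennreal c * (if 0 < t \<and> t \<le> g x then 1 else 0) \<partial>lborel) \<partial>M)"
  proof (rule nn_integral_cong)
    fix x
    have "(\<integral>\<^sup>+t. ennreal c * (if 0 < t \<and> t \<le> g x then 1 else 0) \<partial>lborel)
        = (\<integral>\<^sup>+t. ennreal c * indicator {0<..g x} t \<partial>lborel)"
      by (intro nn_integral_cong) (auto simp: indicator_def)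
    also have "\<dots> = ennreal c * ennreal (g x)"
      by (subst nn_integral_cmult_indicator) (auto simp: g0)
    finally show "ennreal c * ennreal (g x)
       = (\<integral>\<^sup>+t. ennreal c * (if 0 < t \<and> t \<le> g x then 1 else 0) \<partial>lborel)" by simp
  qed
  also have "\<dots> = (\<integral>\<^sup>+t. (\<integral>\<^sup>+x. ennreal c * (if 0 < t \<and> t \<le> g x then 1 else 0) \<partial>M) \<partial>lborel)"
    by (rule Fubini'[symmetric]) measurable
  also have "\<dots> = (\<integral>\<^sup>+t. ennreal c * emeasure M {x\<in>space M. 0 < t \<and> t \<le> g x} \<partial>lborel)"
  proof (rule nn_integral_cong)
    fix t
    have "(\<integral>\<^sup>+x. ennreal c * (if 0 < t \<and> t \<le> g x then 1 else 0) \<partial>M)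
       = (\<integral>\<^sup>+x. ennreal c * indicator {x\<in>space M. 0 < t \<and> t \<le> g x} x \<partial>M)"
      by (intro nn_integral_cong) (auto simp: indicator_def)
    also have "\<dots> = ennreal c * emeasure M {x\<in>space M. 0 < t \<and> t \<le> g x}"
      by (rule nn_integral_cmult_indicator) measurable
    finally show "(\<integral>\<^sup>+x. ennreal c * (if 0 < t \<and> t \<le> g x then 1 else 0) \<partial>M)
       = ennreal c * emeasure M {x\<in>space M. 0 < t \<and> t \<le> g x}" .
  qed
  finally show ?thesis .
qed


lemma shift_set:
  fixes u :: "real \<Rightarrow> real"
  assumes cm: "class_M h lam \<mu>" and h: "h > 0" and lam: "0 \<le> lam"
    and cont: "continuous_on UNIV u" and mono: "\<And>a b. 0 \<le> a \<Longrightarrow> a \<le> b \<Longrightarrow> u a \<le> u b"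
    and t: "t > 0"
  shows "emeasure \<mu> {x. h \<le> x \<and> t \<le> u (x - h)} \<le> ennreal lam * emeasure \<mu> {x. 0 \<le> x \<and> t \<le> u x}"
proof -
  interpret prob_space \<mu> using cm_basic(1)[OF cm] .
  have sets: "sets \<mu> = sets borel" using cm_basic(2)[OF cm] .
  define B where "B = {x. 0 \<le> x \<and> t \<le> u x}"
  define A where "A = {x. h \<le> x \<and> t \<le> u (x - h)}"
  have AB: "x \<in> A \<Longrightarrow> x - h \<in> B" for x by (auto simp: A_def B_def)
  show ?thesis
  proof (cases "B = {}")
    case True
    hence "A = {}" using AB by blast
    thus ?thesis using True unfolding A_def[symmetric] B_def[symmetric] by simp
  next
    case False
    have clB: "closed B"
    proof -
      have "B = {0..} \<inter> {x. (\<lambda>_. t) x \<le> u x}" by (auto simp: B_def)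
      also have "closed \<dots>" by (intro closed_Int closed_atLeast closed_Collect_le cont continuous_on_const)
      finally show ?thesis .
    qed
    have bdd: "bdd_below B" unfolding B_def by (rule bdd_belowI[of _ 0]) auto
    define c where "c = Inf B"
    have cB: "c \<in> B" unfolding c_def by (rule closed_contains_Inf[OF False bdd clB])
    have c0: "0 \<le> c" and tc: "t \<le> u c" using cB by (auto simp: B_def)
    have A_sub: "A \<subseteq> {c + h..}"
    proof
      fix x assume "x \<in> A"
      hence "x - h \<in> B" by (rule AB)
      hence "c \<le> x - h" unfolding c_def by (rule cInf_lower[OF _ bdd])
      thus "x \<in> {c + h..}" by simp
    qed
    have B_sup: "{c..} \<subseteq> B"
    proof
      fix y assume "y \<in> {c..}"
      hence "c \<le> y" by simp
      thus "y \<in> B" using mono[OF c0] tc c0 by (auto simp: B_def intro: order_trans)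
    qed
    have Bm: "B \<in> sets \<mu>" unfolding sets using clB by (rule borel_closed)
    have "emeasure \<mu> A \<le> emeasure \<mu> {c + h..}"
      by (rule emeasure_mono[OF A_sub]) (simp add: sets)
    also have "\<dots> = ennreal (measure \<mu> {c + h..})" by (rule emeasure_eq_measure)
    also have "\<dots> \<le> ennreal (lam * measure \<mu> {c..})"
      using cm c0 unfolding class_M_def by (intro ennreal_leI) auto
    also have "\<dots> = ennreal lam * emeasure \<mu> {c..}"
      using lam by (simp add: emeasure_eq_measure ennreal_mult)
    also have "\<dots> \<le> ennreal lam * emeasure \<mu> B"
      by (intro mult_left_mono emeasure_mono[OF B_sup Bm]) auto
    finally show ?thesis by (simp add: A_def B_def)
  qed
qed

lemma shift:
  fixes u :: "real \<Rightarrow> real"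
  assumes cm: "class_M h lam \<mu>" and h: "h > 0" and lam: "0 \<le> lam"
    and cont: "continuous_on UNIV u" and mono: "\<And>a b. 0 \<le> a \<Longrightarrow> a \<le> b \<Longrightarrow> u a \<le> u b"
    and nn: "\<And>x. 0 \<le> x \<Longrightarrow> 0 \<le> u x"
  shows "(\<integral>\<^sup>+x. ennreal (indicator {h..} x * u (x - h)) \<partial>\<mu>)
     \<le> ennreal lam * (\<integral>\<^sup>+x. ennreal (indicator {0..} x * u x) \<partial>\<mu>)"
proof -
  interpret prob_space \<mu> using cm_basic(1)[OF cm] .
  have sf: "sigma_finite_measure \<mu>" by unfold_locales
  have sp: "space \<mu> = UNIV" using cm_basic(3)[OF cm] .
  have [measurable]: "u \<in> borel_measurable borel" using cont by (rule borel_measurable_continuous_onI)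
  have m0: "(\<lambda>x. indicator {0..} x * u x) \<in> borel_measurable \<mu>"
    unfolding cm_basic(4)[OF cm] by measurable
  have m1: "(\<lambda>x. indicator {h..} x * u (x - h)) \<in> borel_measurable \<mu>"
    unfolding cm_basic(4)[OF cm] by measurable
  have g0: "0 \<le> indicator {0..} x * u x" for x :: real using nn by (auto simp: indicator_def)
  have g1: "0 \<le> indicator {h..} x * u (x - h)" for x :: real using nn h by (auto simp: indicator_def)
  have "(\<integral>\<^sup>+x. ennreal (indicator {h..} x * u (x - h)) \<partial>\<mu>)
      = (\<integral>\<^sup>+x. ennreal 1 * ennreal (indicator {h..} x * u (x - h)) \<partial>\<mu>)" by simp
  also have "\<dots> = (\<integral>\<^sup>+t. ennreal 1 * emeasure \<mu> {x\<in>space \<mu>. 0 < t \<and> t \<le> indicator {h..} x * u (x - h)} \<partial>lborel)"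
    by (rule layer_c[OF sf m1 g1])
  also have "\<dots> \<le> (\<integral>\<^sup>+t. ennreal lam * emeasure \<mu> {x\<in>space \<mu>. 0 < t \<and> t \<le> indicator {0..} x * u x} \<partial>lborel)"
  proof (rule nn_integral_mono)
    fix t :: real
    show "ennreal 1 * emeasure \<mu> {x\<in>space \<mu>. 0 < t \<and> t \<le> indicator {h..} x * u (x - h)}
        \<le> ennreal lam * emeasure \<mu> {x\<in>space \<mu>. 0 < t \<and> t \<le> indicator {0..} x * u x}"
    proof (cases "t > 0")
      case False thus ?thesis by simp
    next
      case True
      have e1: "{x\<in>space \<mu>. 0 < t \<and> t \<le> indicator {h..} x * u (x - h)} = {x. h \<le> x \<and> t \<le> u (x - h)}"
        using True by (auto simp: sp indicator_def)
      have e0: "{x\<in>space \<mu>. 0 < t \<and> t \<le> indicator {0..} x * u x} = {x. 0 \<le> x \<and> t \<le> u x}"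
        using True by (auto simp: sp indicator_def)
      show ?thesis unfolding e0 e1 using shift_set[OF cm h lam cont mono True] by simp
    qed
  qed
  also have "\<dots> = (\<integral>\<^sup>+x. ennreal lam * ennreal (indicator {0..} x * u x) \<partial>\<mu>)"
    by (rule layer_c[OF sf m0 g0, symmetric])
  also have "\<dots> = ennreal lam * (\<integral>\<^sup>+x. ennreal (indicator {0..} x * u x) \<partial>\<mu>)"
    by (rule nn_integral_cmult) (use m0 in measurable)
  finally show ?thesis .
qed


lemma alg1:
  fixes lam p q :: real
  assumes "0 \<le> lam" "lam < 1"
  shows "(p + q)\<^sup>2 \<le> 2 / (1 - lam) * p\<^sup>2 + 2 / (1 + lam) * q\<^sup>2"
proof -
  have pos: "0 < 1 - lam" "0 < 1 + lam" using assms by auto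
  define k where "k = (1 - lam) * (1 + lam)"
  have k: "k > 0" using pos by (simp add: k_def)
  have kA: "k * (2 / (1 - lam)) = 2 * (1 + lam)" using pos by (simp add: k_def)
  have kB: "k * (2 / (1 + lam)) = 2 * (1 - lam)" using pos by (simp add: k_def)
  have "k * (2 / (1 - lam) * p\<^sup>2 + 2 / (1 + lam) * q\<^sup>2)
      = (k * (2 / (1 - lam))) * p\<^sup>2 + (k * (2 / (1 + lam))) * q\<^sup>2" by (simp add: algebra_simps)
  also have "\<dots> = 2 * (1 + lam) * p\<^sup>2 + 2 * (1 - lam) * q\<^sup>2" unfolding kA kB ..
  also have "\<dots> = k * (p + q)\<^sup>2 + ((1 + lam) * p - (1 - lam) * q)\<^sup>2"
    by (simp add: k_def power2_eq_square algebra_simps)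
  finally have "k * (p + q)\<^sup>2 \<le> k * (2 / (1 - lam) * p\<^sup>2 + 2 / (1 + lam) * q\<^sup>2)" by simp
  thus ?thesis using k by simp
qed

lemma alg2:
  fixes lam a d :: real
  assumes "0 \<le> lam" "lam < 1" "0 \<le> d" "a \<le> 2 / (1 - lam) * d + 2 / (1 + lam) * lam * a"
  shows "a \<le> 4 / (1 - lam)\<^sup>2 * d"
proof -
  have pos: "0 < 1 - lam" "0 < 1 + lam" using assms by auto
  define k where "k = (1 - lam) * (1 + lam)"
  have k: "k > 0" using pos by (simp add: k_def)
  have kA: "k * (2 / (1 - lam)) = 2 * (1 + lam)" using pos by (simp add: k_def)
  have kB: "k * (2 / (1 + lam)) = 2 * (1 - lam)" using pos by (simp add: k_def)
  have "k * a \<le> k * (2 / (1 - lam) * d + 2 / (1 + lam) * lam * a)"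
    using assms(4) k by (intro mult_left_mono) auto
  also have "\<dots> = (k * (2 / (1 - lam))) * d + (k * (2 / (1 + lam))) * lam * a" by (simp add: algebra_simps)
  also have "\<dots> = 2 * (1 + lam) * d + 2 * (1 - lam) * lam * a" unfolding kA kB ..
  finally have "a * (1 - lam)\<^sup>2 \<le> 2 * (1 + lam) * d"
    by (simp add: k_def power2_eq_square algebra_simps)
  also have "\<dots> \<le> 4 * d" using assms by (intro mult_right_mono) auto
  finally have "a * (1 - lam)\<^sup>2 \<le> 4 * d" .
  thus ?thesis using pos by (simp add: field_simps)
qed

lemma hardy_trunc:
  fixes g :: "real \<Rightarrow> real"
  assumes cm: "class_M h lam \<mu>" and h: "h > 0" and lam0: "0 \<le> lam" and lam1: "lam < 1"
    and cont: "continuous_on UNIV g" and mono: "\<And>a b. 0 \<le> a \<Longrightarrow> a \<le> b \<Longrightarrow> g a \<le> g b"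
    and g0: "g 0 = 0"
  shows "(\<integral>\<^sup>+x. ennreal (indicator {0..} x * (min (g x) (real n))\<^sup>2) \<partial>\<mu>)
    \<le> ennreal (4 / (1 - lam)\<^sup>2) * (\<integral>\<^sup>+x. ennreal (indicator {0..} x * (g x - g (max (x - h) 0))\<^sup>2) \<partial>\<mu>)"
proof -
  interpret prob_space \<mu> using cm_basic(1)[OF cm] .
  have gnn: "0 \<le> x \<Longrightarrow> 0 \<le> g x" for x using mono[of 0 x] g0 by simp
  define gn where "gn = (\<lambda>x. min (g x) (real n))"
  have gn_cont: "continuous_on UNIV gn" unfolding gn_def by (intro continuous_on_min cont continuous_on_const)
  have gn_mono: "0 \<le> a \<Longrightarrow> a \<le> b \<Longrightarrow> gn a \<le> gn b" for a b using mono[of a b] by (auto simp: gn_def)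
  have gn_nn: "0 \<le> x \<Longrightarrow> 0 \<le> gn x" for x using gnn[of x] by (auto simp: gn_def)
  have gn_le: "gn x \<le> real n" for x by (simp add: gn_def)
  have gn0: "gn 0 = 0" using g0 by (simp add: gn_def)
  have [measurable]: "gn \<in> borel_measurable borel" using gn_cont by (rule borel_measurable_continuous_onI)
  have [measurable]: "g \<in> borel_measurable borel" using cont by (rule borel_measurable_continuous_onI)
  define a where "a x = indicator {0..} x * (gn x)\<^sup>2" for x :: real
  define d where "d x = indicator {0..} x * (gn x - gn (max (x - h) 0))\<^sup>2" for x :: real
  define tt where "tt x = indicator {h..} x * (gn (x - h))\<^sup>2" for x :: real
  define A where "A = 2 / (1 - lam)"
  define B where "B = 2 / (1 + lam)"
  have A0: "0 \<le> A" and B0: "0 \<le> B" using lam0 lam1 by (auto simp: A_def B_def)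
  have ma: "a \<in> borel_measurable \<mu>" unfolding cm_basic(4)[OF cm] a_def by measurable
  have md: "d \<in> borel_measurable \<mu>" unfolding cm_basic(4)[OF cm] d_def by measurable
  have mt: "tt \<in> borel_measurable \<mu>" unfolding cm_basic(4)[OF cm] tt_def by measurable
  have a0: "0 \<le> a x" and d0: "0 \<le> d x" and t0: "0 \<le> tt x" for x
    by (auto simp: a_def d_def tt_def)
  have pw: "a x \<le> A * d x + B * tt x" for x
  proof (cases "x \<ge> 0")
    case False thus ?thesis using A0 B0 d0[of x] t0[of x] by (simp add: a_def)
  next
    case True
    define s where "s = gn (max (x - h) 0)"
    have ts: "tt x = s\<^sup>2" by (cases "x \<ge> h") (auto simp: tt_def s_def gn0 max_def)
    have "a x = ((gn x - s) + s)\<^sup>2" using True by (simp add: a_def)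
    also have "\<dots> \<le> A * (gn x - s)\<^sup>2 + B * s\<^sup>2" unfolding A_def B_def by (rule alg1[OF lam0 lam1])
    finally show ?thesis using True by (simp add: d_def ts s_def)
  qed
  have ta: "(\<integral>\<^sup>+x. ennreal (tt x) \<partial>\<mu>) \<le> ennreal lam * (\<integral>\<^sup>+x. ennreal (a x) \<partial>\<mu>)"
    unfolding tt_def a_def
  proof (rule shift[OF cm h lam0])
    show "continuous_on UNIV (\<lambda>y. (gn y)\<^sup>2)" by (intro continuous_intros gn_cont)
    show "\<And>a b. 0 \<le> a \<Longrightarrow> a \<le> b \<Longrightarrow> (gn a)\<^sup>2 \<le> (gn b)\<^sup>2"
      using gn_mono gn_nn by (intro power_mono) auto
  qed simp
  have afin: "(\<integral>\<^sup>+x. ennreal (a x) \<partial>\<mu>) \<le> ennreal ((real n)\<^sup>2)"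
  proof -
    have "(\<integral>\<^sup>+x. ennreal (a x) \<partial>\<mu>) \<le> (\<integral>\<^sup>+x. ennreal ((real n)\<^sup>2) \<partial>\<mu>)"
    proof (rule nn_integral_mono)
      fix x
      have "a x \<le> (real n)\<^sup>2"
      proof (cases "x \<ge> 0")
        case True thus ?thesis using gn_le[of x] gn_nn[of x] by (simp add: a_def power_mono)
      qed (simp add: a_def)
      thus "ennreal (a x) \<le> ennreal ((real n)\<^sup>2)" by (rule ennreal_leI)
    qed
    also have "\<dots> = ennreal ((real n)\<^sup>2)" by (simp add: emeasure_space_1)
    finally show ?thesis .
  qed
  have dfin: "(\<integral>\<^sup>+x. ennreal (d x) \<partial>\<mu>) \<le> ennreal ((real n)\<^sup>2)"
  proof -
    have "(\<integral>\<^sup>+x. ennreal (d x) \<partial>\<mu>) \<le> (\<integral>\<^sup>+x. ennreal ((real n)\<^sup>2) \<partial>\<mu>)"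
    proof (rule nn_integral_mono)
      fix x
      have "d x \<le> (real n)\<^sup>2"
      proof (cases "x \<ge> 0")
        case True
        have "\<bar>gn x - gn (max (x - h) 0)\<bar> \<le> real n"
          using True gn_le[of x] gn_nn[of x] gn_le[of "max (x - h) 0"] gn_nn[of "max (x - h) 0"] by auto
        hence "\<bar>gn x - gn (max (x - h) 0)\<bar>\<^sup>2 \<le> (real n)\<^sup>2" by (intro power_mono) auto
        thus ?thesis using True by (simp add: d_def)
      qed (simp add: d_def)
      thus "ennreal (d x) \<le> ennreal ((real n)\<^sup>2)" by (rule ennreal_leI)
    qed
    also have "\<dots> = ennreal ((real n)\<^sup>2)" by (simp add: emeasure_space_1)
    finally show ?thesis .
  qed
  obtain \<alpha> where al: "(\<integral>\<^sup>+x. ennreal (a x) \<partial>\<mu>) = ennreal \<alpha>" "0 \<le> \<alpha>"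
    using afin by (metis ennreal_cases ennreal_le_iff2 top_unique ennreal_neq_top)
  obtain \<delta> where de: "(\<integral>\<^sup>+x. ennreal (d x) \<partial>\<mu>) = ennreal \<delta>" "0 \<le> \<delta>"
    using dfin by (metis ennreal_cases ennreal_le_iff2 top_unique ennreal_neq_top)
  have "ennreal \<alpha> \<le> (\<integral>\<^sup>+x. ennreal A * ennreal (d x) + ennreal B * ennreal (tt x) \<partial>\<mu>)"
    unfolding al(1)[symmetric]
  proof (rule nn_integral_mono)
    fix x
    have "ennreal (a x) \<le> ennreal (A * d x + B * tt x)" by (rule ennreal_leI[OF pw])
    also have "\<dots> = ennreal A * ennreal (d x) + ennreal B * ennreal (tt x)"
      using A0 B0 d0[of x] t0[of x] by (simp add: ennreal_plus ennreal_mult)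
    finally show "ennreal (a x) \<le> ennreal A * ennreal (d x) + ennreal B * ennreal (tt x)" .
  qed
  also have "\<dots> = ennreal A * (\<integral>\<^sup>+x. ennreal (d x) \<partial>\<mu>) + ennreal B * (\<integral>\<^sup>+x. ennreal (tt x) \<partial>\<mu>)"
    using md mt by (simp add: nn_integral_add nn_integral_cmult)
  also have "\<dots> \<le> ennreal A * ennreal \<delta> + ennreal B * (ennreal lam * ennreal \<alpha>)"
    using ta unfolding de(1) al(1) by (intro add_mono mult_left_mono) auto
  also have "\<dots> = ennreal (A * \<delta> + B * lam * \<alpha>)"
    using A0 B0 lam0 al(2) de(2) by (simp add: ennreal_plus ennreal_mult mult.assoc)
  finally have "\<alpha> \<le> A * \<delta> + B * lam * \<alpha>"
    using A0 B0 lam0 al(2) de(2) by (subst (asm) ennreal_le_iff) auto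
  hence "\<alpha> \<le> 4 / (1 - lam)\<^sup>2 * \<delta>" unfolding A_def B_def by (intro alg2[OF lam0 lam1 de(2)]) simp
  hence "(\<integral>\<^sup>+x. ennreal (a x) \<partial>\<mu>) \<le> ennreal (4 / (1 - lam)\<^sup>2) * (\<integral>\<^sup>+x. ennreal (d x) \<partial>\<mu>)"
    unfolding al(1) de(1) using de(2) by (simp add: ennreal_mult[symmetric] ennreal_leI)
  also have "(\<integral>\<^sup>+x. ennreal (d x) \<partial>\<mu>) \<le> (\<integral>\<^sup>+x. ennreal (indicator {0..} x * (g x - g (max (x - h) 0))\<^sup>2) \<partial>\<mu>)"
  proof (rule nn_integral_mono)
    fix x
    show "ennreal (d x) \<le> ennreal (indicator {0..} x * (g x - g (max (x - h) 0))\<^sup>2)"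
    proof (cases "x \<ge> 0")
      case True
      define y where "y = max (x - h) 0"
      have y: "0 \<le> y" "y \<le> x" using True h by (auto simp: y_def)
      have gy: "g y \<le> g x" "0 \<le> g y" using mono[OF y] gnn[OF y(1)] by auto
      have "0 \<le> gn x - gn y" "gn x - gn y \<le> g x - g y" using gy by (auto simp: gn_def)
      hence "(gn x - gn y)\<^sup>2 \<le> (g x - g y)\<^sup>2" by (intro power_mono) auto
      thus ?thesis using True by (intro ennreal_leI) (simp add: d_def y_def)
    qed (simp add: d_def)
  qed
  hence "ennreal (4 / (1 - lam)\<^sup>2) * (\<integral>\<^sup>+x. ennreal (d x) \<partial>\<mu>)
      \<le> ennreal (4 / (1 - lam)\<^sup>2) * (\<integral>\<^sup>+x. ennreal (indicator {0..} x * (g x - g (max (x - h) 0))\<^sup>2) \<partial>\<mu>)"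
    by (rule mult_left_mono) simp
  finally show ?thesis by (simp add: a_def gn_def)
qed


lemma hardy:
  fixes g :: "real \<Rightarrow> real"
  assumes cm: "class_M h lam \<mu>" and h: "h > 0" and lam0: "0 \<le> lam" and lam1: "lam < 1"
    and cont: "continuous_on UNIV g" and mono: "\<And>a b. 0 \<le> a \<Longrightarrow> a \<le> b \<Longrightarrow> g a \<le> g b"
    and g0: "g 0 = 0"
  shows "(\<integral>\<^sup>+x. ennreal (indicator {0..} x * (g x)\<^sup>2) \<partial>\<mu>)
    \<le> ennreal (4 / (1 - lam)\<^sup>2) * (\<integral>\<^sup>+x. ennreal (indicator {0..} x * (g x - g (max (x - h) 0))\<^sup>2) \<partial>\<mu>)"
proof -
  have gnn: "0 \<le> x \<Longrightarrow> 0 \<le> g x" for x using mono[of 0 x] g0 by simp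
  have [measurable]: "g \<in> borel_measurable borel" using cont by (rule borel_measurable_continuous_onI)
  define F where "F n x = ennreal (indicator {0..} x * (min (g x) (real n))\<^sup>2)" for n :: nat and x :: real
  have eq: "ennreal (indicator {0..} x * (g x)\<^sup>2) = (SUP n. F n x)" for x
  proof (cases "x \<ge> 0")
    case True
    show ?thesis
    proof (rule antisym)
      define n where "n = nat \<lceil>g x\<rceil>"
      have "g x \<le> real n" unfolding n_def by linarith
      hence "F n x = ennreal (indicator {0..} x * (g x)\<^sup>2)" by (simp add: F_def)
      thus "ennreal (indicator {0..} x * (g x)\<^sup>2) \<le> (SUP n. F n x)"
        by (metis UNIV_I SUP_upper)
    next
      show "(SUP n. F n x) \<le> ennreal (indicator {0..} x * (g x)\<^sup>2)"
      proof (rule SUP_least)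
        fix n
        have "(min (g x) (real n))\<^sup>2 \<le> (g x)\<^sup>2" using gnn[OF True] by (intro power_mono) auto
        thus "F n x \<le> ennreal (indicator {0..} x * (g x)\<^sup>2)" using True by (simp add: F_def ennreal_leI)
      qed
    qed
  next
    case False thus ?thesis by (simp add: F_def)
  qed
  have inc: "incseq F"
  proof (rule incseq_SucI, rule le_funI)
    fix n x
    show "F n x \<le> F (Suc n) x"
    proof (cases "x \<ge> 0")
      case True
      have "(min (g x) (real n))\<^sup>2 \<le> (min (g x) (real (Suc n)))\<^sup>2" using gnn[OF True] by (intro power_mono) auto
      thus ?thesis using True by (simp add: F_def ennreal_leI)
    qed (simp add: F_def)
  qed
  have mF: "F n \<in> borel_measurable \<mu>" for n
    unfolding cm_basic(4)[OF cm] F_def by measurable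
  have "(\<integral>\<^sup>+x. ennreal (indicator {0..} x * (g x)\<^sup>2) \<partial>\<mu>) = (\<integral>\<^sup>+x. (SUP n. F n x) \<partial>\<mu>)"
    by (simp add: eq)
  also have "\<dots> = (SUP n. integral\<^sup>N \<mu> (F n))" by (rule nn_integral_monotone_convergence_SUP[OF inc mF])
  also have "\<dots> \<le> ennreal (4 / (1 - lam)\<^sup>2) * (\<integral>\<^sup>+x. ennreal (indicator {0..} x * (g x - g (max (x - h) 0))\<^sup>2) \<partial>\<mu>)"
    unfolding F_def by (rule SUP_least, rule hardy_trunc[OF cm h lam0 lam1 cont mono g0])
  finally show ?thesis .
qed


theorem lemma2p2:
  fixes h lam :: real and \<mu> :: "real measure" and f :: "real \<Rightarrow> real"
  assumes "h > 0" and "0 \<le> lam" and "lam < 1"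
    and "class_M h lam \<mu>"
    and "convex_on UNIV f" and "f 0 = 0"
  shows "(\<integral>\<^sup>+ x. ennreal ((exp (f x / 2) - exp (- f x / 2))\<^sup>2) \<partial>\<mu>)
         \<le> ennreal (8 / (1 - lam)\<^sup>2) *
           (\<integral>\<^sup>+ x. ennreal (exp (f x) * (discrete_grad h f x)\<^sup>2) \<partial>\<mu>)"
proof -
  note h = assms(1) and lam0 = assms(2) and lam1 = assms(3) and cm = assms(4)
    and cf = assms(5) and f0 = assms(6)
  have contf: "continuous_on UNIV f" using convex_on_continuous[OF _ cf] by simp
  have [measurable]: "f \<in> borel_measurable borel" using contf by (rule borel_measurable_continuous_onI)
  have [measurable]: "discrete_grad h f \<in> borel_measurable borel" by (rule dg_measurable[OF cf])
  define G where "G = (\<lambda>x. psi (max (f x) (f (- x))))"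
  define R where "R = (\<lambda>x. exp (f x) * (discrete_grad h f x)\<^sup>2)"
  define C where "C = 4 / (1 - lam)\<^sup>2"
  have C0: "0 \<le> C" by (simp add: C_def)
  have contG: "continuous_on UNIV G" unfolding G_def psi_def
    by (intro continuous_intros continuous_on_compose2[OF contf] continuous_on_max) auto
  have [measurable]: "G \<in> borel_measurable borel" using contG by (rule borel_measurable_continuous_onI)
  have monoG: "\<And>a b. 0 \<le> a \<Longrightarrow> a \<le> b \<Longrightarrow> G a \<le> G b"
    unfolding G_def by (intro psi_mono m_mono[OF cf f0])
  have G0: "G 0 = 0" using f0 by (simp add: G_def)
  have R0: "0 \<le> R x" for x by (simp add: R_def)
  have meas: "F \<in> borel_measurable borel \<Longrightarrow> F \<in> borel_measurable \<mu>" for F :: "real \<Rightarrow> ennreal"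
    unfolding cm_basic(4)[OF cm] .
  have sumnn: "0 \<le> f x + f (- x)" for x
  proof -
    have "f ((1 - 1/2) * x + (1/2) * (- x)) \<le> (1 - 1/2) * f x + (1/2) * f (- x)"
      using convex_onD[OF cf, of "1/2" x "-x"] by simp
    thus ?thesis using f0 by simp
  qed
  have step1: "(\<integral>\<^sup>+ x. ennreal ((exp (f x / 2) - exp (- f x / 2))\<^sup>2) \<partial>\<mu>)
     \<le> (\<integral>\<^sup>+ x. ennreal (indicator {0..} x * (G x)\<^sup>2) + ennreal (indicator {0..} (- x) * (G (- x))\<^sup>2) \<partial>\<mu>)"
  proof (rule nn_integral_mono)
    fix x :: real
    have ab: "\<bar>f x\<bar> \<le> max (f \<bar>x\<bar>) (f (- \<bar>x\<bar>))"
      using sumnn[of x] by (cases "x \<ge> 0") auto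
    have "(exp (f x / 2) - exp (- f x / 2))\<^sup>2 = (psi (f x))\<^sup>2" by (simp add: psi_def)
    also have "\<dots> \<le> (G \<bar>x\<bar>)\<^sup>2" unfolding G_def by (rule psi_sq_le[OF ab])
    finally have le: "(exp (f x / 2) - exp (- f x / 2))\<^sup>2 \<le> (G \<bar>x\<bar>)\<^sup>2" .
    show "ennreal ((exp (f x / 2) - exp (- f x / 2))\<^sup>2)
        \<le> ennreal (indicator {0..} x * (G x)\<^sup>2) + ennreal (indicator {0..} (- x) * (G (- x))\<^sup>2)"
    proof (cases "x \<ge> 0")
      case True
      thus ?thesis using le by (simp add: ennreal_leI add_increasing2)
    next
      case False
      thus ?thesis using le by (simp add: ennreal_leI add_increasing)
    qed
  qed
  have Fm: "(\<lambda>x. ennreal (indicator {0..} x * (G x)\<^sup>2)) \<in> borel_measurable borel" by measurable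
  have sym1: "(\<integral>\<^sup>+ x. ennreal (indicator {0..} (- x) * (G (- x))\<^sup>2) \<partial>\<mu>)
      = (\<integral>\<^sup>+ x. ennreal (indicator {0..} x * (G x)\<^sup>2) \<partial>\<mu>)"
    using sym_int[OF cm Fm] by simp
  define I where "I = (\<integral>\<^sup>+ x. ennreal (indicator {0..} x * (G x)\<^sup>2) \<partial>\<mu>)"
  define Dn where "Dn = (\<integral>\<^sup>+x. ennreal (indicator {0..} x * (G x - G (max (x - h) 0))\<^sup>2) \<partial>\<mu>)"
  have step2: "(\<integral>\<^sup>+ x. ennreal (indicator {0..} x * (G x)\<^sup>2) + ennreal (indicator {0..} (- x) * (G (- x))\<^sup>2) \<partial>\<mu>)
      = 2 * I"
    apply (subst nn_integral_add)
    subgoal by (rule meas) measurable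
    subgoal by (rule meas) measurable
    using sym1 by (simp add: I_def mult_2)
  have step3: "I \<le> ennreal C * Dn"
    unfolding I_def Dn_def C_def by (rule hardy[OF cm h lam0 lam1 contG monoG G0])
  have step4: "Dn \<le> (\<integral>\<^sup>+x. ennreal (indicator {0<..} x * R x) + ennreal (indicator {0<..} x * R (- x)) \<partial>\<mu>)"
    unfolding Dn_def
  proof (rule nn_integral_mono)
    fix x :: real
    have "indicator {0..} x * (G x - G (max (x - h) 0))\<^sup>2 \<le> indicator {0<..} x * (R x + R (- x))"
    proof (cases "x \<ge> 0")
      case True
      have i1: "indicator {0..} x = (1::real)" using True by simp
      show ?thesis unfolding i1 mult_1 G_def R_def by (rule delta_bound[OF cf f0 h True])
    next
      case False
      have i1: "indicator {0..} x = (0::real)" "indicator {0<..} x = (0::real)" using False by auto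
      show ?thesis unfolding i1 mult_zero_left by (rule order_refl)
    qed
    also have "\<dots> = indicator {0<..} x * R x + indicator {0<..} x * R (- x)" by (rule distrib_left)
    finally have "ennreal (indicator {0..} x * (G x - G (max (x - h) 0))\<^sup>2)
        \<le> ennreal (indicator {0<..} x * R x + indicator {0<..} x * R (- x))" by (rule ennreal_leI)
    also have "\<dots> = ennreal (indicator {0<..} x * R x) + ennreal (indicator {0<..} x * R (- x))"
      by (rule ennreal_plus) (simp_all add: R0)
    finally show "ennreal (indicator {0..} x * (G x - G (max (x - h) 0))\<^sup>2)
        \<le> ennreal (indicator {0<..} x * R x) + ennreal (indicator {0<..} x * R (- x))" .
  qed
  have Fm2: "(\<lambda>z. ennreal (indicator {0<..} (- z) * R z)) \<in> borel_measurable borel"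
    unfolding R_def by measurable
  have sym2: "(\<integral>\<^sup>+ x. ennreal (indicator {0<..} x * R (- x)) \<partial>\<mu>)
      = (\<integral>\<^sup>+ x. ennreal (indicator {0<..} (- x) * R x) \<partial>\<mu>)"
    using sym_int[OF cm Fm2] by simp
  have step5: "(\<integral>\<^sup>+x. ennreal (indicator {0<..} x * R x) + ennreal (indicator {0<..} x * R (- x)) \<partial>\<mu>)
      \<le> (\<integral>\<^sup>+x. ennreal (R x) \<partial>\<mu>)"
  proof -
    have "(\<integral>\<^sup>+x. ennreal (indicator {0<..} x * R x) + ennreal (indicator {0<..} x * R (- x)) \<partial>\<mu>)
       = (\<integral>\<^sup>+ x. ennreal (indicator {0<..} x * R x) \<partial>\<mu>) + (\<integral>\<^sup>+ x. ennreal (indicator {0<..} x * R (- x)) \<partial>\<mu>)"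
      apply (rule nn_integral_add)
      subgoal by (rule meas) (unfold R_def, measurable)
      subgoal by (rule meas) (unfold R_def, measurable)
      done
    also have "\<dots> = (\<integral>\<^sup>+ x. ennreal (indicator {0<..} x * R x) \<partial>\<mu>) + (\<integral>\<^sup>+ x. ennreal (indicator {0<..} (- x) * R x) \<partial>\<mu>)"
      unfolding sym2 ..
    also have "\<dots> = (\<integral>\<^sup>+ x. ennreal (indicator {0<..} x * R x) + ennreal (indicator {0<..} (- x) * R x) \<partial>\<mu>)"
      apply (rule nn_integral_add[symmetric])
      subgoal by (rule meas) (unfold R_def, measurable)
      subgoal by (rule meas) (unfold R_def, measurable)
      done
    also have "\<dots> \<le> (\<integral>\<^sup>+x. ennreal (R x) \<partial>\<mu>)"
    proof (rule nn_integral_mono)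
      fix x :: real
      show "ennreal (indicator {0<..} x * R x) + ennreal (indicator {0<..} (- x) * R x) \<le> ennreal (R x)"
        by (cases "x > 0") (auto simp: indicator_def)
    qed
    finally show ?thesis .
  qed
  have "(\<integral>\<^sup>+ x. ennreal ((exp (f x / 2) - exp (- f x / 2))\<^sup>2) \<partial>\<mu>) \<le> 2 * I"
    using step1 step2 by simp
  also have "\<dots> \<le> 2 * (ennreal C * Dn)" using step3 by (intro mult_left_mono) auto
  also have "\<dots> \<le> 2 * (ennreal C * (\<integral>\<^sup>+x. ennreal (R x) \<partial>\<mu>))"
    using step4 step5 by (intro mult_left_mono) auto
  also have "\<dots> = ennreal (8 / (1 - lam)\<^sup>2) * (\<integral>\<^sup>+x. ennreal (R x) \<partial>\<mu>)"
  proof -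
    have e8: "8 / (1 - lam)\<^sup>2 = 2 * C" by (simp add: C_def)
    have "ennreal (8 / (1 - lam)\<^sup>2) = ennreal 2 * ennreal C"
      unfolding e8 using C0 by (rule ennreal_mult[rotated]) simp
    thus ?thesis by (simp add: mult.assoc)
  qed
  finally show ?thesis by (simp add: R_def)
qed


end
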